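(* There is a closed subset $B$ of $2^\omega$ such that $\lambda(B)>1/2$ and for each $x\in B$ we have $flip_n(x)\notin B$ for infinitely many $n\in\omega$.
   Context: $\lambda$ is the standard product (Haar/coin-tossing) measure on $2^\omega$. For $n\in\omega$, $flip_n\colon2^\omega\to2^\omega$ is given by $flip_n(x)=x+\chi_{\{n\}}$ (addition coordinatewise mod 2), i.e. it changes the $n$-th coordinate of $x$. *)

theory Defs
  imports "HOL-Probability.Probability"
begin

definition cantor_measure :: "(nat \<Rightarrow> bool) measure" where
  "cantor_measure = PiM UNIV (\<lambda>_. measure_pmf (pmf_of_set (UNIV :: bool set)))"

definition cantor_topology :: "(nat \<Rightarrow> bool) topology" where
  "cantor_topology = product_topology (\<lambda>_. discrete_topology (UNIV :: bool set)) UNIV"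

definition flip :: "nat \<Rightarrow> (nat \<Rightarrow> bool) \<Rightarrow> (nat \<Rightarrow> bool)" where
  "flip n x = x(n := \<not> x n)"

end

theory Submission
  imports Defs
begin

abbreviation M0 :: "bool measure" where "M0 \<equiv> measure_pmf (pmf_of_set (UNIV :: bool set))"

interpretation PP: product_prob_space "\<lambda>_::nat. M0" UNIV
  by unfold_locales

lemma spP: "space (Pi\<^sub>M UNIV (\<lambda>_::nat. M0)) = UNIV"
  by (simp add: space_PiM)

lemma space_C[simp]: "space cantor_measure = UNIV"
  unfolding cantor_measure_def by (rule spP)

lemma prob_C: "prob_space cantor_measure"
  unfolding cantor_measure_def by (rule PP.P.prob_space_axioms)

lemma emb_eq: "prod_emb UNIV (\<lambda>_::nat. M0) J (PiE J F) = {x. \<forall>i\<in>J. x i \<in> F i}"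
proof -
  have a: "restrict x J \<in> PiE J F \<longleftrightarrow> (\<forall>i\<in>J. x i \<in> F i)" for x :: "nat \<Rightarrow> bool"
    by (simp add: PiE_iff)
  show ?thesis
    unfolding prod_emb_def
    by (intro set_eqI) (simp only: Int_iff vimage_eq a space_measure_pmf PiE_UNIV_domain UNIV_I
        extensional_UNIV simp_thms mem_Collect_eq Pi_UNIV)
qed

definition fdet :: "nat set \<Rightarrow> (nat \<Rightarrow> bool) set \<Rightarrow> bool" where
  "fdet J S \<longleftrightarrow> (\<forall>x y. (\<forall>i\<in>J. x i = y i) \<longrightarrow> (x \<in> S \<longleftrightarrow> y \<in> S))"

lemma fdet_repr:
  assumes "fdet J S"
  shows "S = (\<Union>y\<in>(\<lambda>x. restrict x J) ` S. {x. \<forall>i\<in>J. x i = y i})"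
  using assms unfolding fdet_def by auto

lemma fdet_finite_img: "finite J \<Longrightarrow> finite ((\<lambda>x. restrict x J) ` (S :: (nat \<Rightarrow> bool) set))"
  by (rule finite_subset[OF _ finite_PiE[of J "\<lambda>_. UNIV :: bool set"]]) auto

lemma cyl_sets: "finite J \<Longrightarrow> {x. \<forall>i\<in>J. x i = y i} \<in> sets cantor_measure"
proof -
  assume J: "finite J"
  have "prod_emb UNIV (\<lambda>_. M0) J (PiE J (\<lambda>i. {y i})) = {x. \<forall>i\<in>J. x i \<in> {y i}}"
    by (rule emb_eq)
  then have "{x. \<forall>i\<in>J. x i = y i} = prod_emb UNIV (\<lambda>_. M0) J (PiE J (\<lambda>i. {y i}))"
    by simp
  also have "\<dots> \<in> sets cantor_measure"
    unfolding cantor_measure_def using J by (intro sets_PiM_I) simp_all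
  finally show ?thesis .
qed

lemma cyl_closed: "closedin cantor_topology {x. \<forall>i\<in>J. x i = y i}"
proof -
  have "{x. \<forall>i\<in>J. x i = y i} = PiE UNIV (\<lambda>i. if i \<in> J then {y i} else UNIV)"
    by (auto simp: PiE_iff split: if_splits)
  then show ?thesis unfolding cantor_topology_def
    by (simp add: closedin_product_topology)
qed

lemma fdet_sets: "finite J \<Longrightarrow> fdet J S \<Longrightarrow> S \<in> sets cantor_measure"
proof -
  assume J: "finite J" and S: "fdet J S"
  have "S = (\<Union>y\<in>(\<lambda>x. restrict x J) ` S. {x. \<forall>i\<in>J. x i = y i})" by (rule fdet_repr[OF S])
  also have "\<dots> \<in> sets cantor_measure"
    by (rule sets.finite_UN[OF fdet_finite_img[OF J] cyl_sets[OF J]])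
  finally show ?thesis .
qed

lemma fdet_closed: "finite J \<Longrightarrow> fdet J S \<Longrightarrow> closedin cantor_topology S"
proof -
  assume J: "finite J" and S: "fdet J S"
  have "S = (\<Union>y\<in>(\<lambda>x. restrict x J) ` S. {x. \<forall>i\<in>J. x i = y i})" by (rule fdet_repr[OF S])
  also have "closedin cantor_topology \<dots>"
  proof (rule closedin_Union)
    show "finite ((\<lambda>y. {x. \<forall>i\<in>J. x i = y i}) ` (\<lambda>x. restrict x J) ` S)"
      by (rule finite_imageI[OF fdet_finite_img[OF J]])
  next
    fix T assume "T \<in> (\<lambda>y. {x. \<forall>i\<in>J. x i = y i}) ` (\<lambda>x. restrict x J) ` S"
    then obtain y where "T = {x. \<forall>i\<in>J. x i = y i}" by blast
    then show "closedin cantor_topology T" using cyl_closed by simp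
  qed
  finally show ?thesis .
qed

lemma emeasure_M0: "emeasure M0 A = ennreal (card A / 2)"
  by (simp add: measure_pmf.emeasure_eq_measure measure_pmf_of_set)

lemma flip_meas: "flip p \<in> measurable (Pi\<^sub>M UNIV (\<lambda>_::nat. M0)) (Pi\<^sub>M UNIV (\<lambda>_. M0))"
proof (rule measurable_PiM_single')
  fix i :: nat
  have any: "f \<in> measurable M0 M0" for f :: "bool \<Rightarrow> bool"
    by (simp add: measurable_def)
  have c: "(\<lambda>\<omega>. \<omega> j) \<in> measurable (Pi\<^sub>M UNIV (\<lambda>_. M0)) M0" for j :: nat
    by (rule measurable_component_singleton) simp
  have "(\<lambda>\<omega>. flip p \<omega> i) = (\<lambda>\<omega>. (if i = p then Not else id) (\<omega> i))"
    by (auto simp: flip_def)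
  then show "(\<lambda>\<omega>. flip p \<omega> i) \<in> measurable (Pi\<^sub>M UNIV (\<lambda>_. M0)) M0"
    using measurable_comp[OF c any] by (simp add: comp_def)
qed (simp add: spP)

lemma flip_inv: "distr cantor_measure cantor_measure (flip p) = cantor_measure"
  unfolding cantor_measure_def
proof (rule PP.PiM_eq)
  show "sets (distr (Pi\<^sub>M UNIV (\<lambda>_. M0)) (Pi\<^sub>M UNIV (\<lambda>_. M0)) (flip p)) = sets (Pi\<^sub>M UNIV (\<lambda>_. M0))"
    by simp
next
  fix J F assume J: "finite J" "J \<subseteq> (UNIV::nat set)" and F: "\<And>j. j \<in> J \<Longrightarrow> F j \<in> sets M0"
  let ?G = "\<lambda>i. if i = p then Not -` F i else F i"
  have pre: "flip p -` {x. \<forall>i\<in>J. x i \<in> F i} = {x. \<forall>i\<in>J. x i \<in> ?G i}"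
    by (auto simp: flip_def)
  have G: "emeasure M0 (?G i) = emeasure M0 (F i)" for i
  proof -
    have "card (Not -` F i) = card (F i)"
      by (rule card_vimage_inj) (auto simp: inj_def)
    then show ?thesis by (cases "i = p") (simp_all add: emeasure_M0)
  qed
  have ins: "prod_emb UNIV (\<lambda>_. M0) J (PiE J F) \<in> sets (Pi\<^sub>M UNIV (\<lambda>_. M0))"
    using J F by (intro sets_PiM_I) auto
  have coll: "emeasure (Pi\<^sub>M UNIV (\<lambda>_. M0)) {x. \<forall>i\<in>J. x i \<in> ?G i} = (\<Prod>i\<in>J. emeasure M0 (?G i))"
    using PP.emeasure_PiM_Collect[of J ?G] J by (simp add: spP)
  have "emeasure (distr (Pi\<^sub>M UNIV (\<lambda>_. M0)) (Pi\<^sub>M UNIV (\<lambda>_. M0)) (flip p)) (prod_emb UNIV (\<lambda>_. M0) J (PiE J F))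
     = emeasure (Pi\<^sub>M UNIV (\<lambda>_. M0)) (flip p -` prod_emb UNIV (\<lambda>_. M0) J (PiE J F) \<inter> space (Pi\<^sub>M UNIV (\<lambda>_. M0)))"
    by (rule emeasure_distr[OF flip_meas ins])
  also have "\<dots> = emeasure (Pi\<^sub>M UNIV (\<lambda>_. M0)) {x. \<forall>i\<in>J. x i \<in> ?G i}"
    by (simp only: emb_eq pre spP Int_UNIV_right)
  also have "\<dots> = (\<Prod>i\<in>J. emeasure M0 (?G i))"
    by (rule coll)
  also have "\<dots> = (\<Prod>i\<in>J. emeasure M0 (F i))"
    by (rule prod.cong[OF refl G])
  finally show "emeasure (distr (Pi\<^sub>M UNIV (\<lambda>_. M0)) (Pi\<^sub>M UNIV (\<lambda>_. M0)) (flip p)) (prod_emb UNIV (\<lambda>_. M0) J (PiE J F)) = (\<Prod>j\<in>J. emeasure M0 (F j))" .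
qed

definition blk :: "nat \<Rightarrow> nat set" where "blk k = {2^(k+3)..<2^(k+4)}"
definition cnt :: "nat \<Rightarrow> (nat \<Rightarrow> bool) \<Rightarrow> nat \<Rightarrow> nat" where
  "cnt k x j = card {n \<in> blk k. x n \<and> bit n j}"
definition DD :: "nat \<Rightarrow> nat \<Rightarrow> (nat \<Rightarrow> bool) set" where
  "DD k r = {x. \<forall>j<k+3. odd (cnt k x j) = bit r j}"

lemma finite_blk[simp]: "finite (blk k)" by (simp add: blk_def)

lemma pow4: "(2::nat)^(k+4) = 2 * 2^(k+3)" by (simp add: power_add)

lemma card_blk: "card (blk k) = 2^(k+3)"
  by (simp add: blk_def pow4)

lemma cnt_flip_in:
  assumes p: "p \<in> blk k"
  shows "odd (cnt k (flip p x) j) = (odd (cnt k x j) \<noteq> bit p j)"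
proof -
  let ?S = "{n \<in> blk k. x n \<and> bit n j}"
  let ?S' = "{n \<in> blk k. flip p x n \<and> bit n j}"
  have fin: "finite ?S" by simp
  show ?thesis
  proof (cases "bit p j")
    case False
    then have "?S' = ?S" by (auto simp: flip_def)
    then show ?thesis using False by (simp add: cnt_def)
  next
    case True
    show ?thesis
    proof (cases "x p")
      case xp: True
      then have e: "?S' = ?S - {p}" using True p by (auto simp: flip_def)
      have pS: "p \<in> ?S" using True xp p by simp
      have c1: "card ?S' = card ?S - 1" using e fin pS by (simp add: card_Diff_singleton)
      have c2: "card ?S \<ge> 1" using fin pS by (metis One_nat_def Suc_leI card_gt_0_iff empty_iff)
      have par: "\<And>c::nat. c \<ge> 1 \<Longrightarrow> odd (c - 1) = (odd c \<noteq> True)"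
        by (case_tac c) auto
      show ?thesis by (simp only: cnt_def c1 True par[OF c2])
    next
      case xp: False
      then have e: "?S' = insert p ?S" using True p by (auto simp: flip_def)
      have "p \<notin> ?S" using xp by simp
      then have c1: "card ?S' = Suc (card ?S)"
        using e fin by simp
      have par: "\<And>c::nat. odd (Suc c) = (odd c \<noteq> True)"
        by simp
      show ?thesis by (simp only: cnt_def c1 True par)
    qed
  qed
qed

lemma exists_p: "\<exists>p\<in>blk k. \<forall>j<k+3. bit p j = P j"
proof -
  let ?m = "k+3"
  let ?h = "horner_sum of_bool 2 (map P [0..<?m]) :: nat"
  have hl: "?h < 2^?m" using horner_sum_of_bool_2_less[of "map P [0..<?m]"] by simp
  let ?p = "2^?m + ?h"
  have pin: "?p \<in> blk k" using hl by (simp add: blk_def pow4)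
  have "take_bit ?m ?p = ?h"
    using hl by (simp add: take_bit_eq_mod)
  then have "bit ?p j = P j" if "j < ?m" for j
  proof -
    have "bit ?p j = bit (take_bit ?m ?p) j" using that by (simp add: bit_take_bit_iff)
    also have "\<dots> = bit ?h j" using \<open>take_bit ?m ?p = ?h\<close> by simp
    also have "\<dots> = P j" using that by (simp add: bit_horner_sum_bit_iff)
    finally show ?thesis .
  qed
  then show ?thesis using pin by blast
qed

lemma uniq_p:
  assumes p: "p \<in> blk k" and q: "q \<in> blk k" and b: "\<forall>j<k+3. bit p j = bit q j"
  shows "p = q"
proof -
  let ?m = "k+3"
  have t: "take_bit ?m p = take_bit ?m q"
    using b by (auto simp: bit_eq_iff bit_take_bit_iff)
  have dp: "p div 2^?m = 1" using p by (simp add: blk_def div_nat_eqI pow4)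
  have dq: "q div 2^?m = 1" using q by (simp add: blk_def div_nat_eqI pow4)
  have "p = 2^?m * (p div 2^?m) + p mod 2^?m" by simp
  also have "\<dots> = 2^?m * (q div 2^?m) + q mod 2^?m"
    using t dp dq by (simp add: take_bit_eq_mod)
  also have "\<dots> = q" by simp
  finally show ?thesis .
qed

lemma DD_pre: assumes p: "p \<in> blk k" shows "flip p -` DD k 0 = DD k p"
proof (intro set_eqI)
  fix x
  have "x \<in> flip p -` DD k 0 \<longleftrightarrow> (\<forall>j<k+3. odd (cnt k (flip p x) j) = False)"
    by (simp add: DD_def)
  also have "\<dots> \<longleftrightarrow> (\<forall>j<k+3. (odd (cnt k x j) \<noteq> bit p j) = False)"
    using cnt_flip_in[OF p, of x] by (simp only:)
  also have "\<dots> \<longleftrightarrow> x \<in> DD k p"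
    by (auto simp: DD_def)
  finally show "x \<in> flip p -` DD k 0 \<longleftrightarrow> x \<in> DD k p" .
qed

lemma fdet_DD: "fdet (blk k) (DD k r)"
proof -
  have "cnt k x j = cnt k y j" if "\<forall>i\<in>blk k. x i = y i" for x y :: "nat \<Rightarrow> bool" and j
    unfolding cnt_def using that by (metis (no_types, lifting) Collect_cong)
  then show ?thesis unfolding fdet_def
  proof (intro allI impI)
    fix x y :: "nat \<Rightarrow> bool" assume h: "\<And>x y j. \<forall>i\<in>blk k. x i = y i \<Longrightarrow> cnt k x j = cnt k y j"
      and a: "\<forall>i\<in>blk k. x i = y i"
    have "\<forall>j. cnt k x j = cnt k y j" using h[OF a] by blast
    then show "x \<in> DD k r \<longleftrightarrow> y \<in> DD k r" by (simp add: DD_def)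
  qed
qed

lemma fdet_compl: "fdet J S \<Longrightarrow> fdet J (- S)"
  unfolding fdet_def by auto

lemma DD_sets: "DD k r \<in> sets cantor_measure"
  by (rule fdet_sets[OF finite_blk fdet_DD])

lemma measure_DD: "measure cantor_measure (DD k 0) = 1 / 2^(k+3)"
proof -
  interpret C: prob_space cantor_measure by (rule prob_C)
  have fm: "flip p \<in> measurable cantor_measure cantor_measure" for p
    unfolding cantor_measure_def by (rule flip_meas)
  have eq: "measure cantor_measure (DD k p) = measure cantor_measure (DD k 0)" if "p \<in> blk k" for p
  proof -
    have "measure cantor_measure (DD k 0) = measure (distr cantor_measure cantor_measure (flip p)) (DD k 0)"
      by (simp add: flip_inv)
    also have "\<dots> = measure cantor_measure (flip p -` DD k 0 \<inter> space cantor_measure)"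
      by (rule measure_distr[OF fm DD_sets])
    also have "\<dots> = measure cantor_measure (DD k p)"
      using DD_pre[OF that] by simp
    finally show ?thesis by simp
  qed
  have un: "(\<Union>p\<in>blk k. DD k p) = UNIV"
  proof (intro set_eqI iffI)
    fix x :: "nat \<Rightarrow> bool"
    obtain p where "p \<in> blk k" "\<forall>j<k+3. bit p j = odd (cnt k x j)"
      using exists_p[of k "\<lambda>j. odd (cnt k x j)"] by blast
    then show "x \<in> (\<Union>p\<in>blk k. DD k p)" by (auto simp: DD_def)
  qed simp
  have disj: "disjoint_family_on (DD k) (blk k)"
    unfolding disjoint_family_on_def
  proof (intro ballI impI)
    fix p q assume pq: "p \<in> blk k" "q \<in> blk k" "p \<noteq> q"
    show "DD k p \<inter> DD k q = {}"
    proof (rule ccontr)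
      assume "DD k p \<inter> DD k q \<noteq> {}"
      then obtain x where "x \<in> DD k p" "x \<in> DD k q" by blast
      then have "\<forall>j<k+3. bit p j = bit q j" by (auto simp: DD_def)
      then show False using uniq_p pq by blast
    qed
  qed
  have "1 = measure cantor_measure (\<Union>p\<in>blk k. DD k p)"
    using C.prob_space by (simp add: un)
  also have "\<dots> = (\<Sum>p\<in>blk k. measure cantor_measure (DD k p))"
    by (rule measure_finite_Union) (auto simp: DD_sets disj C.emeasure_eq_measure)
  also have "\<dots> = (\<Sum>p\<in>blk k. measure cantor_measure (DD k 0))"
    by (rule sum.cong[OF refl eq])
  also have "\<dots> = 2^(k+3) * measure cantor_measure (DD k 0)"
    by (simp add: card_blk)
  finally show ?thesis by (simp add: field_simps)
qed

theorem proposition6p2: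
  shows "\<exists>B. closedin cantor_topology B \<and> B \<in> sets cantor_measure \<and>
             measure cantor_measure B > 1/2 \<and>
             (\<forall>x\<in>B. infinite {n. flip n x \<notin> B})"
proof -
  interpret C: prob_space cantor_measure by (rule prob_C)
  define U where "U = (\<Union>k. DD k 0)"
  define B where "B = UNIV - U"
  have Usets: "U \<in> sets cantor_measure"
    unfolding U_def by (intro sets.countable_UN) (auto intro: DD_sets)
  have Bsets: "B \<in> sets cantor_measure"
    unfolding B_def using sets.compl_sets[OF Usets] by simp
  have Bint: "B = \<Inter> (range (\<lambda>k. - DD k 0))"
    unfolding B_def U_def by auto
  have closed: "closedin cantor_topology B"
    unfolding Bint
  proof (rule closedin_Inter)
    fix S assume "S \<in> range (\<lambda>k. - DD k 0)"
    then obtain k where "S = - DD k 0" by blast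
    then show "closedin cantor_topology S"
      using fdet_closed[OF finite_blk fdet_compl[OF fdet_DD]] by simp
  qed simp
  have geo: "(\<lambda>k. measure cantor_measure (DD k 0)) = (\<lambda>k. (1/2::real)^k / 8)"
    by (rule ext) (simp add: measure_DD power_add power_one_over)
  have summ: "summable (\<lambda>k. (1/2::real)^k / 8)"
    by (intro summable_divide summable_geometric) simp
  have sumv: "(\<Sum>k. (1/2::real)^k / 8) = 1/4"
    using suminf_divide[OF summable_geometric[of "1/2::real"], of 8] suminf_geometric[of "1/2::real"]
    by simp
  have "measure cantor_measure U \<le> (\<Sum>k. measure cantor_measure (DD k 0))"
    unfolding U_def
    by (rule C.finite_measure_subadditive_countably) (auto intro: DD_sets simp: geo summ)
  then have Ule: "measure cantor_measure U \<le> 1/4" using sumv geo by simp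
  have "measure cantor_measure B = 1 - measure cantor_measure U"
    unfolding B_def using C.prob_compl[OF Usets] by simp
  then have meas: "measure cantor_measure B > 1/2" using Ule by simp
  have inf: "infinite {n. flip n x \<notin> B}" if xB: "x \<in> B" for x
    unfolding infinite_nat_iff_unbounded_le
  proof
    fix m
    obtain p where p: "p \<in> blk m" and pb: "\<forall>j<m+3. bit p j = odd (cnt m x j)"
      using exists_p[of m "\<lambda>j. odd (cnt m x j)"] by blast
    have "x \<in> DD m p" using pb by (auto simp: DD_def)
    then have "x \<in> flip p -` DD m 0" using DD_pre[OF p] by simp
    then have "flip p x \<notin> B" unfolding B_def U_def by auto
    moreover have "m \<le> p"
    proof -
      have "m < 2^m" by simp
      also have "(2::nat)^m \<le> 2^(m+3)" by (rule power_increasing) simp_all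
      also have "\<dots> \<le> p" using p by (simp add: blk_def)
      finally show ?thesis by simp
    qed
    ultimately show "\<exists>n\<ge>m. n \<in> {n. flip n x \<notin> B}" by blast
  qed
  show ?thesis using closed Bsets meas inf by blast
qed

end
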